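(* Let $q \in Q$ and $x \in [0,1]^{|N|}$. (i) $v^{\mathrm{tight}}_q(x) \le v^{\mathrm{agg}}_q(x) \le v^{\mathrm{disagg}}_q(x)$. (ii) If $R_q$ consists of a single path, then $v^{\mathrm{agg}}_q(x) = v^{\mathrm{disagg}}_q(x)$. (iii) If $R_q$ consists of a single simple path, then $v^{\mathrm{tight}}_q(x) = v^{\mathrm{agg}}_q(x) = v^{\mathrm{disagg}}_q(x)$.
   Context: Let $G=(N,A)$ be a finite undirected graph with edge lengths $\ell_e > 0$, and let $d>0$ be the travel range, with $\ell_e \le d$ for every edge. A path is a sequence $r=(v_0,v_1,\dots,v_m)$, $m\ge 1$, of nodes in which consecutive nodes are joined by an edge (nodes may repeat); $r$ is simple if its nodes are distinct. For $x \in \{0,1\}^N$ ($x_j = 1$ meaning a charging station at node $j$), path $r$ is repeatedly traversable under $x$ if, letting $W=(v_0,\dots,v_m,v_{m-1},\dots,v_0)$ be the round trip along $r$, at least one node of $r$ has $x_j=1$ and, in the infinite periodic repetition of $W$, the distance travelled between any two consecutive visits to nodes with a station is at most $d$. Let $Q$ be a finite set of demands; each $q\in Q$ has a flow volume $f_q \ge 0$ and a finite nonempty set $R_q$ of paths. For each $q \in Q$ and $r \in R_q$, $\mathcal{D}_{q,r}\subseteq 2^N$ is a family of node sets such that for every $x \in \{0,1\}^N$: $r$ is repeatedly traversable under $x$ if and only if $\sum_{j\in S} x_j \ge 1$ for all $S \in \mathcal{D}_{q,r}$. Define $\mathcal{C}_q = \{ \bigcup_{r \in R_q} S_r : S_r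 \in \mathcal{D}_{q,r} \text{ for each } r \in R_q\}$. For $x \in [0,1]^{|N|}$ define $v^{\mathrm{disagg}}_q(x) = \max\{ \sum_{r \in R_q} f_q z_r : z \in [0,1]^{|R_q|},\ \sum_{r\in R_q} z_r \le 1,\ \sum_{j \in S} x_j \ge z_r \ \forall r \in R_q, S \in \mathcal{D}_{q,r}\}$, $v^{\mathrm{agg}}_q(x) = \max\{ f_q y : y \in [0,1],\ \sum_{j \in S} x_j \ge y \ \forall S \in \mathcal{C}_q\}$. Let $K_q$ be the set of all concave functions $v$ on $[0,1]^{|N|}$ with $v(x') = v^{\mathrm{agg}}_q(x')$ for all $x' \in \{0,1\}^{|N|}$, and $v^{\mathrm{tight}}_q(x) = \inf_{v \in K_q} v(x)$. *)

theory Defs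
  imports "HOL-Analysis.Analysis"
begin

text \<open>Nodes are the elements of a finite type 'n (so N = UNIV and |N| = CARD('n));
  vectors x in R^N are of type real^'n. Undirected simple graph: edges are 2-element node sets.\<close>

definition undirected_graph :: "'n set set \<Rightarrow> bool" where
  "undirected_graph A \<longleftrightarrow> (\<forall>e\<in>A. card e = 2)"

definition is_path :: "'n set set \<Rightarrow> 'n list \<Rightarrow> bool" where
  "is_path A r \<longleftrightarrow> length r \<ge> 2 \<and> (\<forall>i. Suc i < length r \<longrightarrow> {r ! i, r ! Suc i} \<in> A)"

definition simple_path :: "'n set set \<Rightarrow> 'n list \<Rightarrow> bool" where
  "simple_path A r \<longleftrightarrow> is_path A r \<and> distinct r"

definition round_trip :: "'n list \<Rightarrow> 'n list" where
  "round_trip r = r @ tl (rev r)"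

text \<open>k-th node of the infinite periodic repetition of W (period 2m).\<close>
definition walk_node :: "'n list \<Rightarrow> nat \<Rightarrow> 'n" where
  "walk_node r k = round_trip r ! (k mod (2 * (length r - 1)))"

definition travel_dist :: "('n set \<Rightarrow> real) \<Rightarrow> 'n list \<Rightarrow> nat \<Rightarrow> nat \<Rightarrow> real" where
  "travel_dist len r i j = (\<Sum>k\<in>{i..<j}. len {walk_node r k, walk_node r (Suc k)})"

definition rep_traversable :: "('n set \<Rightarrow> real) \<Rightarrow> real \<Rightarrow> real^'n \<Rightarrow> 'n list \<Rightarrow> bool" where
  "rep_traversable len d x r \<longleftrightarrow>
     (\<exists>j\<in>set r. x $ j = 1) \<and>
     (\<forall>i j. i < j \<and> x $ (walk_node r i) = 1 \<and> x $ (walk_node r j) = 1 \<and>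
            (\<forall>k. i < k \<and> k < j \<longrightarrow> x $ (walk_node r k) \<noteq> 1)
        \<longrightarrow> travel_dist len r i j \<le> d)"

definition binary_vec :: "real^'n \<Rightarrow> bool" where
  "binary_vec x \<longleftrightarrow> (\<forall>j. x $ j = 0 \<or> x $ j = 1)"

definition unit_cube :: "(real^'n) set" where
  "unit_cube = {x. \<forall>j. 0 \<le> x $ j \<and> x $ j \<le> 1}"

definition agg_family :: "'p set \<Rightarrow> ('p \<Rightarrow> 'n set set) \<Rightarrow> 'n set set" where
  "agg_family R D = {(\<Union>r\<in>R. S r) | S. \<forall>r\<in>R. S r \<in> D r}"

definition v_disagg :: "real \<Rightarrow> 'p set \<Rightarrow> ('p \<Rightarrow> 'n set set) \<Rightarrow> real^'n \<Rightarrow> real" where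
  "v_disagg f R D x = Sup {(\<Sum>r\<in>R. f * z r) | z.
       (\<forall>r\<in>R. 0 \<le> z r \<and> z r \<le> 1) \<and> (\<Sum>r\<in>R. z r) \<le> 1 \<and>
       (\<forall>r\<in>R. \<forall>S\<in>D r. (\<Sum>j\<in>S. x $ j) \<ge> z r)}"

definition v_agg :: "real \<Rightarrow> 'p set \<Rightarrow> ('p \<Rightarrow> 'n set set) \<Rightarrow> real^'n \<Rightarrow> real" where
  "v_agg f R D x = Sup {f * y | y. 0 \<le> y \<and> y \<le> 1 \<and>
       (\<forall>S\<in>agg_family R D. (\<Sum>j\<in>S. x $ j) \<ge> y)}"

definition K_set :: "real \<Rightarrow> 'p set \<Rightarrow> ('p \<Rightarrow> 'n set set) \<Rightarrow> ((real^'n) \<Rightarrow> real) set" where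
  "K_set f R D = {v. concave_on unit_cube v \<and> (\<forall>x'. binary_vec x' \<longrightarrow> v x' = v_agg f R D x')}"

definition v_tight :: "real \<Rightarrow> 'p set \<Rightarrow> ('p \<Rightarrow> 'n set set) \<Rightarrow> real^'n \<Rightarrow> real" where
  "v_tight f R D x = Inf {v x | v. v \<in> K_set f R D}"

end

theory Submission
  imports Defs
begin


lemma hermite_aux:
  fixes y :: real and N :: nat and i :: nat
  assumes N: "N > 0" and i: "i < N"
  shows "\<lfloor>y + real i / real N\<rfloor> = \<lfloor>real N * y\<rfloor> div int N + (if int i + \<lfloor>real N * y\<rfloor> mod int N \<ge> int N then 1 else 0)"
proof -
  define k where "k = \<lfloor>real N * y\<rfloor>"
  define q where "q = k div int N"
  define s where "s = k mod int N"
  have ks: "k = int N * q + s" unfolding q_def s_def by simp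
  have s0: "0 \<le> s" "s < int N" unfolding s_def using N by auto
  have k1: "real_of_int k \<le> real N * y" "real N * y < real_of_int k + 1" unfolding k_def by linarith+
  have ksr: "real_of_int k = real N * real_of_int q + real_of_int s" using ks by simp
  have s0r: "0 \<le> real_of_int s" "real_of_int s + 1 \<le> real N" using s0 by linarith+
  have Npos: "real N > 0" using N by simp
  have ir: "real i + 1 \<le> real N" using i by linarith
  have e: "y + real i / real N = (real N * y + real i) / real N" using Npos by (simp add: field_simps)
  define c where "c = (if int i + s \<ge> int N then 1 else 0::int)"
  have c1: "int i + s \<ge> int N \<Longrightarrow> real i + real_of_int s \<ge> real N" by linarith
  have c2: "\<not> int i + s \<ge> int N \<Longrightarrow> real i + real_of_int s + 1 \<le> real N" by linarith
  have lo: "real N * (real_of_int q + real_of_int c) \<le> real N * y + real i"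
    using c1 c2 k1 ksr s0r unfolding c_def by (auto simp: algebra_simps)
  have hi: "real N * y + real i < real N * (real_of_int q + real_of_int c + 1)"
    using c1 c2 k1 ksr s0r ir unfolding c_def by (auto simp: algebra_simps)
  have "\<lfloor>y + real i / real N\<rfloor> = q + c"
  proof (subst floor_eq_iff, intro conjI)
    show "real_of_int (q + c) \<le> y + real i / real N" using lo Npos e by (simp add: field_simps)
    show "y + real i / real N < real_of_int (q + c) + 1" using hi Npos e by (simp add: field_simps)
  qed
  then show ?thesis unfolding c_def q_def s_def k_def by (simp add: add.commute)
qed

lemma hermite:
  fixes y :: real and N :: nat
  assumes N: "N > 0"
  shows "(\<Sum>i<N. \<lfloor>y + real i / real N\<rfloor>) = \<lfloor>real N * y\<rfloor>"
proof -
  define k where "k = \<lfloor>real N * y\<rfloor>"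
  define s where "s = nat (k mod int N)"
  have s0: "int s = k mod int N" "s < N" unfolding s_def using N by (auto simp: nat_less_iff)
  have "(\<Sum>i<N. \<lfloor>y + real i / real N\<rfloor>) = (\<Sum>i<N. k div int N + (if i \<in> {N - s..<N} then 1 else 0))"
    by (rule sum.cong) (use s0 N hermite_aux[OF N] in \<open>auto simp: k_def\<close>)
  also have "\<dots> = int N * (k div int N) + int (card ({..<N} \<inter> {N - s..<N}))"
  proof -
    have "(\<Sum>i<N. k div int N + (if i \<in> {N - s..<N} then 1 else 0)) = (\<Sum>i<N. k div int N) + (\<Sum>i<N. (if i \<in> {N - s..<N} then 1 else 0))"
      by (rule sum.distrib)
    also have "(\<Sum>i<N. (if i \<in> {N - s..<N} then 1 else 0::int)) = int (card ({..<N} \<inter> {N - s..<N}))"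
    proof -
      have e: "{..<N} \<inter> Collect ((\<le>) (N - s)) = {..<N} \<inter> {N - s..<N}" by auto
      show ?thesis by (simp add: sum.If_cases e)
    qed
    finally show ?thesis by simp
  qed
  also have "{..<N} \<inter> {N - s..<N} = {N - s..<N}" by auto
  also have "int (card {N - s..<N}) = int s" using s0 by simp
  also have "int N * (k div int N) + int s = k" using s0 by simp
  finally show ?thesis unfolding k_def .
qed
lemma floor_diff_01:
  fixes y a :: real
  assumes "0 \<le> a" "a \<le> 1"
  shows "\<lfloor>y + a\<rfloor> - \<lfloor>y\<rfloor> = 0 \<or> \<lfloor>y + a\<rfloor> - \<lfloor>y\<rfloor> = 1"
proof -
  have "\<lfloor>y\<rfloor> \<le> \<lfloor>y + a\<rfloor>" using assms by (intro floor_mono) simp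
  moreover have "\<lfloor>y + a\<rfloor> \<le> \<lfloor>y + 1\<rfloor>" using assms by (intro floor_mono) simp
  ultimately show ?thesis by linarith
qed

lemma floor_lim: "(\<lambda>n. real_of_int \<lfloor>real (Suc n) * z\<rfloor> / real (Suc n)) \<longlonglongrightarrow> (z::real)"
proof (rule tendsto_sandwich[of "\<lambda>n. z - inverse (real (Suc n))" _ _ "\<lambda>n. z"])
  show "\<forall>\<^sub>F n in sequentially. z - inverse (real (Suc n)) \<le> real_of_int \<lfloor>real (Suc n) * z\<rfloor> / real (Suc n)"
  proof (rule always_eventually, rule allI)
    fix n
    have p: "real (Suc n) > 0" by simp
    have "real (Suc n) * z - 1 \<le> real_of_int \<lfloor>real (Suc n) * z\<rfloor>" by linarith
    then have "(real (Suc n) * z - 1) / real (Suc n) \<le> real_of_int \<lfloor>real (Suc n) * z\<rfloor> / real (Suc n)"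
      using p by (intro divide_right_mono) auto
    moreover have "(real (Suc n) * z - 1) / real (Suc n) = z - inverse (real (Suc n))"
      using p by (simp add: field_simps)
    ultimately show "z - inverse (real (Suc n)) \<le> real_of_int \<lfloor>real (Suc n) * z\<rfloor> / real (Suc n)"
      by simp
  qed
  show "\<forall>\<^sub>F n in sequentially. real_of_int \<lfloor>real (Suc n) * z\<rfloor> / real (Suc n) \<le> z"
  proof (rule always_eventually, rule allI)
    fix n
    have p: "real (Suc n) > 0" by simp
    have "real_of_int \<lfloor>real (Suc n) * z\<rfloor> \<le> real (Suc n) * z" by linarith
    then show "real_of_int \<lfloor>real (Suc n) * z\<rfloor> / real (Suc n) \<le> z"
      using p by (simp add: field_simps)
  qed
  have "(\<lambda>n. z - inverse (real (Suc n))) \<longlonglongrightarrow> z - 0"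
    by (intro tendsto_intros LIMSEQ_inverse_real_of_nat)
  then show "(\<lambda>n. z - inverse (real (Suc n))) \<longlonglongrightarrow> z" by simp
qed simp

definition rvec :: "('n::finite \<Rightarrow> real) \<Rightarrow> ('n \<Rightarrow> real) \<Rightarrow> real \<Rightarrow> real^'n" where
  "rvec lo a u = (\<chi> j. real_of_int (\<lfloor>lo j + a j + u\<rfloor> - \<lfloor>lo j + u\<rfloor>))"

lemma rvec_01:
  assumes "\<forall>j. 0 \<le> a j \<and> a j \<le> 1"
  shows "rvec lo a u $ j = 0 \<or> rvec lo a u $ j = 1"
  using floor_diff_01[of "a j" "lo j + u"] assms unfolding rvec_def
  by (auto simp: add_ac)

lemma round_hull:
  fixes lo a :: "'n::finite \<Rightarrow> real"
  assumes a01: "\<forall>j. 0 \<le> a j \<and> a j \<le> 1"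
  shows "(\<chi> j. a j) \<in> convex hull (rvec lo a ` {0..<1})"
proof -
  define B where "B = rvec lo a ` {0..<1}"
  have "B \<subseteq> (\<lambda>T. \<chi> j. if j \<in> T then 1 else 0) ` UNIV"
  proof
    fix b assume "b \<in> B"
    then obtain u where b: "b = rvec lo a u" unfolding B_def by auto
    have "b = (\<chi> j. if j \<in> {j. b $ j = 1} then 1 else 0)"
      using rvec_01[OF a01, of lo u] unfolding b by (auto simp: vec_eq_iff)
    then show "b \<in> (\<lambda>T. \<chi> j. if j \<in> T then 1 else 0) ` UNIV" by blast
  qed
  then have finB: "finite B" by (rule finite_subset) simp
  then have cl: "closed (convex hull B)"
    by (simp add: compact_imp_closed compact_convex_hull finite_imp_compact)
  define c where "c n = (\<Sum>i<Suc n. (1 / real (Suc n)) *\<^sub>R rvec lo a (real i / real (Suc n)))" for n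
  have cin: "c n \<in> convex hull B" for n
    unfolding c_def
  proof (rule convex_sum)
    show "rvec lo a (real i / real (Suc n)) \<in> convex hull B" if "i \<in> {..<Suc n}" for i
      using that unfolding B_def by (intro hull_inc imageI) (auto simp: field_simps)
  qed auto
  have ceq: "c n $ j = (real_of_int \<lfloor>real (Suc n) * (lo j + a j)\<rfloor> - real_of_int \<lfloor>real (Suc n) * lo j\<rfloor>) / real (Suc n)" for n j
  proof -
    have "c n $ j = (1 / real (Suc n)) * (\<Sum>i<Suc n. real_of_int (\<lfloor>lo j + a j + real i / real (Suc n)\<rfloor> - \<lfloor>lo j + real i / real (Suc n)\<rfloor>))"
      unfolding c_def rvec_def by (simp only: sum_component vector_scaleR_component vec_lambda_beta sum_distrib_left real_scaleR_def)
    also have "(\<Sum>i<Suc n. real_of_int (\<lfloor>lo j + a j + real i / real (Suc n)\<rfloor> - \<lfloor>lo j + real i / real (Suc n)\<rfloor>))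
        = real_of_int ((\<Sum>i<Suc n. \<lfloor>lo j + a j + real i / real (Suc n)\<rfloor>) - (\<Sum>i<Suc n. \<lfloor>lo j + real i / real (Suc n)\<rfloor>))"
      by (simp add: sum_subtractf)
    also have "\<dots> = real_of_int \<lfloor>real (Suc n) * (lo j + a j)\<rfloor> - real_of_int \<lfloor>real (Suc n) * lo j\<rfloor>"
      using hermite[of "Suc n" "lo j + a j"] hermite[of "Suc n" "lo j"] by simp
    finally show ?thesis by simp
  qed
  have lim: "c \<longlonglongrightarrow> (\<chi> j. a j)"
  proof (rule vec_tendstoI)
    fix j
    have "(\<lambda>n. real_of_int \<lfloor>real (Suc n) * (lo j + a j)\<rfloor> / real (Suc n) - real_of_int \<lfloor>real (Suc n) * lo j\<rfloor> / real (Suc n))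
       \<longlonglongrightarrow> (lo j + a j) - lo j"
      by (intro tendsto_intros floor_lim)
    then show "(\<lambda>n. c n $ j) \<longlonglongrightarrow> (\<chi> j. a j) $ j"
      unfolding ceq by (simp add: diff_divide_distrib)
  qed
  show ?thesis using closed_sequentially[OF cl cin lim] unfolding B_def .
qed

lemma unit_cube_cbox: "unit_cube = cbox (0::real^'n::finite) 1"
  unfolding unit_cube_def by (rule set_eqI) (simp add: mem_box_cart)

lemma convex_unit_cube: "convex (unit_cube :: (real^'n::finite) set)"
  unfolding unit_cube_cbox by simp

lemma binary_in_cube: "binary_vec b \<Longrightarrow> b \<in> unit_cube"
proof -
  assume b: "binary_vec b"
  have "0 \<le> b $ j \<and> b $ j \<le> 1" for j
    using b unfolding binary_vec_def by (metis order_refl zero_le_one)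
  then show ?thesis unfolding unit_cube_def by simp
qed

lemma rvec_binary:
  assumes "\<forall>j. 0 \<le> a j \<and> a j \<le> 1"
  shows "binary_vec (rvec lo a u)"
  using rvec_01[OF assms] unfolding binary_vec_def by blast

lemma concave_hull_lower:
  fixes v :: "real^'n::finite \<Rightarrow> real"
  assumes conc: "concave_on unit_cube v" and B: "B \<subseteq> unit_cube" and vB: "\<forall>b\<in>B. m \<le> v b"
    and y: "y \<in> convex hull B"
  shows "m \<le> v y"
proof -
  have sub: "convex hull B \<subseteq> unit_cube"
    by (rule hull_minimal) (use B convex_unit_cube in auto)
  have "convex_on unit_cube (\<lambda>x. - v x)" using conc unfolding concave_on_def .
  then have "convex_on (convex hull B) (\<lambda>x. - v x)"
    by (rule convex_on_subset) (use sub in auto)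
  from convex_on_convex_hull_bound[OF this, of "- m"] vB y show ?thesis by auto
qed

lemma cube_in_hull:
  fixes y :: "real^'n::finite"
  assumes "y \<in> unit_cube"
  shows "y \<in> convex hull (rvec (\<lambda>_. 0) (\<lambda>j. y $ j) ` {0..<1})"
    and "rvec (\<lambda>_. 0) (\<lambda>j. y $ j) ` {0..<1} \<subseteq> {b. binary_vec b}"
proof -
  have a: "\<forall>j. 0 \<le> y $ j \<and> y $ j \<le> 1" using assms unfolding unit_cube_def by auto
  show "y \<in> convex hull (rvec (\<lambda>_. 0) (\<lambda>j. y $ j) ` {0..<1})"
    using round_hull[OF a, of "\<lambda>_. 0"] by simp
  show "rvec (\<lambda>_. 0) (\<lambda>j. y $ j) ` {0..<1} \<subseteq> {b. binary_vec b}"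
    using rvec_binary[OF a] by auto
qed

lemma concave_nonneg:
  fixes v :: "real^'n::finite \<Rightarrow> real"
  assumes conc: "concave_on unit_cube v" and vb: "\<forall>b. binary_vec b \<longrightarrow> 0 \<le> v b"
    and y: "y \<in> unit_cube"
  shows "0 \<le> v y"
proof (rule concave_hull_lower[OF conc _ _ cube_in_hull(1)[OF y]])
  show "rvec (\<lambda>_. 0) (($) y) ` {0..<1} \<subseteq> unit_cube"
    using cube_in_hull(2)[OF y] binary_in_cube by blast
  show "\<forall>b\<in>rvec (\<lambda>_. 0) (($) y) ` {0..<1}. 0 \<le> v b"
    using cube_in_hull(2)[OF y] vb by blast
qed

definition gmin :: "'n set set \<Rightarrow> real^'n \<Rightarrow> real" where
  "gmin C y = Min (insert 1 ((\<lambda>S. \<Sum>j\<in>S. y $ j) ` C))"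

lemma sum_nonneg_cube: "y \<in> unit_cube \<Longrightarrow> 0 \<le> (\<Sum>j\<in>S. y $ j)"
  unfolding unit_cube_def by (auto intro: sum_nonneg)

lemma gmin_props:
  fixes C :: "('n::finite) set set"
  assumes y: "y \<in> unit_cube"
  shows "0 \<le> gmin C y" "gmin C y \<le> 1" "\<And>S. S \<in> C \<Longrightarrow> gmin C y \<le> (\<Sum>j\<in>S. y $ j)"
    "\<And>z. z \<le> 1 \<Longrightarrow> (\<forall>S\<in>C. z \<le> (\<Sum>j\<in>S. y $ j)) \<Longrightarrow> z \<le> gmin C y"
proof -
  have fin: "finite (insert 1 ((\<lambda>S. \<Sum>j\<in>S. y $ j) ` C))" by simp
  show "0 \<le> gmin C y" unfolding gmin_def using fin sum_nonneg_cube[OF y] by (auto simp: Min_ge_iff)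
  show "gmin C y \<le> 1" unfolding gmin_def using fin by (intro Min_le) auto
  show "gmin C y \<le> (\<Sum>j\<in>S. y $ j)" if "S \<in> C" for S unfolding gmin_def using fin that by (intro Min_le) auto
  show "z \<le> gmin C y" if "z \<le> 1" "\<forall>S\<in>C. z \<le> (\<Sum>j\<in>S. y $ j)" for z
    unfolding gmin_def using fin that by (auto simp: Min_ge_iff)
qed

lemma v_agg_eq:
  fixes D :: "'p \<Rightarrow> ('n::finite) set set"
  assumes F: "0 \<le> F" and y: "y \<in> unit_cube"
  shows "v_agg F R D y = F * gmin (agg_family R D) y"
  unfolding v_agg_def
proof (rule cSup_eq_maximum)
  show "F * gmin (agg_family R D) y \<in> {F * z |z. 0 \<le> z \<and> z \<le> 1 \<and> (\<forall>S\<in>agg_family R D. z \<le> (\<Sum>j\<in>S. y $ j))}"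
    using gmin_props[OF y, where C="agg_family R D"] by blast
  show "w \<le> F * gmin (agg_family R D) y" if "w \<in> {F * z |z. 0 \<le> z \<and> z \<le> 1 \<and> (\<forall>S\<in>agg_family R D. z \<le> (\<Sum>j\<in>S. y $ j))}" for w
    using that gmin_props(4)[OF y] F by (auto intro: mult_left_mono)
qed

lemma v_disagg_single:
  fixes D :: "'p \<Rightarrow> ('n::finite) set set"
  assumes F: "0 \<le> F" and y: "y \<in> unit_cube"
  shows "v_disagg F {r} D y = F * gmin (D r) y"
  unfolding v_disagg_def
proof (rule cSup_eq_maximum)
  let ?X = "{(\<Sum>r\<in>{r}. F * z r) |z. (\<forall>r\<in>{r}. 0 \<le> z r \<and> z r \<le> 1) \<and> (\<Sum>r\<in>{r}. z r) \<le> 1 \<and> (\<forall>r\<in>{r}. \<forall>S\<in>D r. z r \<le> (\<Sum>j\<in>S. y $ j))}"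
  show "F * gmin (D r) y \<in> ?X"
    using gmin_props[OF y, where C="D r"] by (intro CollectI exI[of _ "\<lambda>_. gmin (D r) y"]) auto
  show "w \<le> F * gmin (D r) y" if "w \<in> ?X" for w
    using that gmin_props(4)[OF y] F by (auto intro: mult_left_mono)
qed

lemma agg_family_single: "agg_family {r} D = D r"
  unfolding agg_family_def
proof (intro set_eqI iffI)
  fix T assume "T \<in> {\<Union> (S ` {r}) |S. \<forall>r\<in>{r}. S r \<in> D r}"
  then show "T \<in> D r" by auto
next
  fix T assume "T \<in> D r"
  then have "T = \<Union> ((\<lambda>_. T) ` {r}) \<and> (\<forall>r'\<in>{r}. (\<lambda>_. T) r' \<in> D r')" by auto
  then show "T \<in> {\<Union> (S ` {r}) |S. \<forall>r\<in>{r}. S r \<in> D r}" by blast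
qed

lemma gmin_concave:
  fixes C :: "('n::finite) set set"
  assumes "a \<in> unit_cube" "b \<in> unit_cube" "0 \<le> u" "0 \<le> w" "u + w = 1"
  shows "u * gmin C a + w * gmin C b \<le> gmin C (u *\<^sub>R a + w *\<^sub>R b)"
proof -
  have c: "u *\<^sub>R a + w *\<^sub>R b \<in> unit_cube"
    using convex_unit_cube assms unfolding convex_def by blast
  show ?thesis
  proof (rule gmin_props(4)[OF c])
    have "u * gmin C a \<le> u * 1" using gmin_props(2)[OF assms(1), of C] assms(3) by (rule mult_left_mono)
    moreover have "w * gmin C b \<le> w * 1" using gmin_props(2)[OF assms(2), of C] assms(4) by (rule mult_left_mono)
    ultimately show "u * gmin C a + w * gmin C b \<le> 1" using assms(5) by linarith
    show "\<forall>S\<in>C. u * gmin C a + w * gmin C b \<le> (\<Sum>j\<in>S. (u *\<^sub>R a + w *\<^sub>R b) $ j)"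
    proof
      fix S assume S: "S \<in> C"
      have "(\<Sum>j\<in>S. (u *\<^sub>R a + w *\<^sub>R b) $ j) = u * (\<Sum>j\<in>S. a $ j) + w * (\<Sum>j\<in>S. b $ j)"
        by (simp add: sum.distrib sum_distrib_left)
      moreover have "u * gmin C a \<le> u * (\<Sum>j\<in>S. a $ j)"
        using gmin_props(3)[OF assms(1) S] assms(3) by (rule mult_left_mono)
      moreover have "w * gmin C b \<le> w * (\<Sum>j\<in>S. b $ j)"
        using gmin_props(3)[OF assms(2) S] assms(4) by (rule mult_left_mono)
      ultimately show "u * gmin C a + w * gmin C b \<le> (\<Sum>j\<in>S. (u *\<^sub>R a + w *\<^sub>R b) $ j)" by simp
    qed
  qed
qed

lemma v_agg_concave:
  fixes D :: "'p \<Rightarrow> ('n::finite) set set"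
  assumes F: "0 \<le> F"
  shows "concave_on unit_cube (v_agg F R D)"
  unfolding concave_on_iff
proof (intro conjI ballI allI impI convex_unit_cube)
  fix a b :: "real^'n" and u w :: real
  assume ab: "a \<in> unit_cube" "b \<in> unit_cube" and uw: "0 \<le> u" "0 \<le> w" "u + w = 1"
  have c: "u *\<^sub>R a + w *\<^sub>R b \<in> unit_cube"
    using convex_unit_cube ab uw unfolding convex_def by blast
  have "u * (F * gmin (agg_family R D) a) + w * (F * gmin (agg_family R D) b)
      = F * (u * gmin (agg_family R D) a + w * gmin (agg_family R D) b)" by (simp add: algebra_simps)
  also have "\<dots> \<le> F * gmin (agg_family R D) (u *\<^sub>R a + w *\<^sub>R b)"
    using gmin_concave[OF ab uw] F by (rule mult_left_mono)
  finally show "u * v_agg F R D a + w * v_agg F R D b \<le> v_agg F R D (u *\<^sub>R a + w *\<^sub>R b)"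
    by (simp only: v_agg_eq[OF F ab(1)] v_agg_eq[OF F ab(2)] v_agg_eq[OF F c])
qed

lemma sum_UN_le_nonneg:
  fixes y :: "'a \<Rightarrow> real"
  assumes "finite R" "\<And>j. 0 \<le> y j" "\<And>r. r \<in> R \<Longrightarrow> finite (S r)"
  shows "(\<Sum>j\<in>(\<Union>r\<in>R. S r). y j) \<le> (\<Sum>r\<in>R. \<Sum>j\<in>S r. y j)"
  using assms(1,3)
proof (induction R rule: finite_induct)
  case empty then show ?case by simp
next
  case (insert a R)
  have fin: "finite (\<Union>r\<in>R. S r)" "finite (S a)" using insert by auto
  have "(\<Sum>j\<in>(\<Union>r\<in>insert a R. S r). y j) = (\<Sum>j\<in>S a \<union> (\<Union>r\<in>R. S r). y j)" by simp
  also have "\<dots> \<le> (\<Sum>j\<in>S a. y j) + (\<Sum>j\<in>(\<Union>r\<in>R. S r). y j)"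
    using sum_Un[OF fin(2) fin(1), of y] sum_nonneg[of "S a \<inter> (\<Union>r\<in>R. S r)" y] assms(2) by simp
  also have "\<dots> \<le> (\<Sum>j\<in>S a. y j) + (\<Sum>r\<in>R. \<Sum>j\<in>S r. y j)"
    using insert by simp
  finally show ?case using insert by simp
qed

lemma disagg_ge:
  fixes D :: "'p \<Rightarrow> ('n::finite) set set"
  assumes R: "finite R" and F: "0 \<le> F" and y: "y \<in> unit_cube"
  shows "F * gmin (agg_family R D) y \<le> v_disagg F R D y"
proof -
  define m where "m r = gmin (D r) y" for r
  define M where "M = (\<Sum>r\<in>R. m r)"
  define t where "t = gmin (agg_family R D) y"
  have m01: "0 \<le> m r" "m r \<le> 1" for r using gmin_props(1,2)[OF y] unfolding m_def by auto
  have M0: "0 \<le> M" unfolding M_def using m01 by (simp add: sum_nonneg)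
  have t01: "0 \<le> t" "t \<le> 1" using gmin_props(1,2)[OF y] unfolding t_def by auto
  have tM: "t \<le> M"
  proof (cases "\<exists>r\<in>R. m r = 1")
    case True
    then obtain r where r: "r \<in> R" "m r = 1" by blast
    have "m r \<le> M" unfolding M_def using r(1) R m01 by (intro member_le_sum) auto
    then show ?thesis using r t01 by simp
  next
    case False
    have ex: "\<exists>S. S \<in> D r \<and> (\<Sum>j\<in>S. y $ j) = m r" if "r \<in> R" for r
    proof -
      have fin: "finite (insert 1 ((\<lambda>S. \<Sum>j\<in>S. y $ j) ` D r))" by simp
      have "m r \<in> insert 1 ((\<lambda>S. \<Sum>j\<in>S. y $ j) ` D r)"
        unfolding m_def gmin_def using Min_in[OF fin] by blast
      then show ?thesis using False that by auto
    qed
    define S where "S r = (SOME S. S \<in> D r \<and> (\<Sum>j\<in>S. y $ j) = m r)" for r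
    have S: "S r \<in> D r" "(\<Sum>j\<in>S r. y $ j) = m r" if "r \<in> R" for r
      using someI_ex[OF ex[OF that]] unfolding S_def by auto
    have "(\<Union>r\<in>R. S r) \<in> agg_family R D" unfolding agg_family_def using S by blast
    then have "t \<le> (\<Sum>j\<in>(\<Union>r\<in>R. S r). y $ j)" unfolding t_def by (rule gmin_props(3)[OF y])
    also have "\<dots> \<le> (\<Sum>r\<in>R. \<Sum>j\<in>S r. y $ j)"
      using R y unfolding unit_cube_def by (intro sum_UN_le_nonneg) auto
    also have "\<dots> = M" unfolding M_def using S by simp
    finally show ?thesis .
  qed
  define z where "z r = m r * t / M" for r
  have sumz: "(\<Sum>r\<in>R. z r) = t"
  proof (cases "M = 0")
    case True
    then have "t = 0" using tM t01 by simp
    then show ?thesis unfolding z_def by simp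
  next
    case False
    have "(\<Sum>r\<in>R. z r) = (\<Sum>r\<in>R. m r) * t / M" unfolding z_def by (simp add: sum_divide_distrib sum_distrib_right)
    then show ?thesis using False unfolding M_def by simp
  qed
  have zle: "z r \<le> m r" "0 \<le> z r" for r
  proof -
    show "0 \<le> z r" unfolding z_def using m01 t01 M0 by simp
    show "z r \<le> m r"
    proof (cases "M = 0")
      case True then show ?thesis unfolding z_def using m01 by simp
    next
      case False
      then have Mp: "M > 0" using M0 by simp
      have "m r * t \<le> m r * M" using tM m01 by (intro mult_left_mono) auto
      then show ?thesis unfolding z_def using Mp by (simp add: divide_le_eq)
    qed
  qed
  let ?X = "{(\<Sum>r\<in>R. F * z r) |z. (\<forall>r\<in>R. 0 \<le> z r \<and> z r \<le> 1) \<and> (\<Sum>r\<in>R. z r) \<le> 1 \<and> (\<forall>r\<in>R. \<forall>S\<in>D r. z r \<le> (\<Sum>j\<in>S. y $ j))}"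
  have mem: "(\<Sum>r\<in>R. F * z r) \<in> ?X"
  proof (intro CollectI exI conjI)
    show "\<forall>r\<in>R. 0 \<le> z r \<and> z r \<le> 1" using zle m01 by (meson order_trans)
    show "(\<Sum>r\<in>R. z r) \<le> 1" using sumz t01 by simp
    show "\<forall>r\<in>R. \<forall>S\<in>D r. z r \<le> (\<Sum>j\<in>S. y $ j)"
      using zle gmin_props(3)[OF y] unfolding m_def by (meson order_trans)
  qed simp
  have bdd: "bdd_above ?X"
  proof (rule bdd_aboveI)
    fix w assume "w \<in> ?X"
    then obtain z' where w: "w = (\<Sum>r\<in>R. F * z' r)" "(\<Sum>r\<in>R. z' r) \<le> 1" by blast
    have "w = F * (\<Sum>r\<in>R. z' r)" using w by (simp add: sum_distrib_left)
    also have "\<dots> \<le> F * 1" using w(2) F by (intro mult_left_mono) auto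
    finally show "w \<le> F" by simp
  qed
  have "F * t = (\<Sum>r\<in>R. F * z r)" using sumz by (simp add: sum_distrib_left[symmetric])
  also have "\<dots> \<le> Sup ?X" using mem bdd by (rule cSup_upper)
  finally show ?thesis unfolding t_def v_disagg_def .
qed

definition gidx :: "nat \<Rightarrow> nat \<Rightarrow> nat" where
  "gidx m k = (if k mod (2*m) \<le> m then k mod (2*m) else 2*m - k mod (2*m))"

lemma gidx_lt: "1 \<le> m \<Longrightarrow> gidx m k \<le> m"
  unfolding gidx_def by auto

lemma walk_node_eq:
  assumes "2 \<le> length r"
  shows "walk_node r k = r ! gidx (length r - 1) k"
proof -
  define m where "m = length r - 1"
  define p where "p = k mod (2*m)"
  have m1: "1 \<le> m" "length r = Suc m" using assms unfolding m_def by auto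
  have p: "p < 2*m" unfolding p_def using m1 by simp
  have "round_trip r ! p = r ! (if p \<le> m then p else 2*m - p)"
  proof (cases "p \<le> m")
    case True then show ?thesis unfolding round_trip_def using m1 by (simp add: nth_append)
  next
    case False
    then have "round_trip r ! p = tl (rev r) ! (p - Suc m)"
      unfolding round_trip_def using m1 by (simp add: nth_append)
    also have "\<dots> = rev r ! Suc (p - Suc m)"
      using m1 p False by (simp add: nth_tl)
    also have "\<dots> = r ! (length r - Suc (Suc (p - Suc m)))"
      using m1 p False by (intro rev_nth) simp
    also have "length r - Suc (Suc (p - Suc m)) = 2*m - p" using m1 p False by simp
    finally show ?thesis using False by simp
  qed
  then show ?thesis unfolding walk_node_def gidx_def p_def m_def by simp
qed

lemma gidx_step:
  assumes "1 \<le> m"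
  shows "gidx m (Suc k) \<le> gidx m k + 1 \<and> gidx m k \<le> gidx m (Suc k) + 1"
proof -
  have pos: "0 < 2*m" using assms by simp
  have "Suc k mod (2*m) = (if Suc (k mod (2*m)) = 2*m then 0 else Suc (k mod (2*m)))"
    by (rule mod_Suc)
  moreover have "k mod (2*m) < 2*m" using pos by simp
  ultimately show ?thesis unfolding gidx_def using assms by auto
qed

lemma discrete_ivt:
  fixes g :: "nat \<Rightarrow> nat"
  assumes step: "\<And>k. g (Suc k) \<le> g k + 1 \<and> g k \<le> g (Suc k) + 1"
  shows "a \<le> b \<Longrightarrow> (g a \<le> v \<and> v \<le> g b) \<or> (g b \<le> v \<and> v \<le> g a) \<Longrightarrow> \<exists>c. a \<le> c \<and> c \<le> b \<and> g c = v"
proof (induction b)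
  case 0 then show ?case by auto
next
  case (Suc b)
  show ?case
  proof (cases "a = Suc b")
    case True then show ?thesis using Suc.prems by auto
  next
    case False
    then have ab: "a \<le> b" using Suc.prems by simp
    show ?thesis
    proof (cases "(g a \<le> v \<and> v \<le> g b) \<or> (g b \<le> v \<and> v \<le> g a)")
      case True
      then obtain c where "a \<le> c \<and> c \<le> b \<and> g c = v" using Suc.IH ab by blast
      then show ?thesis by (intro exI[of _ c]) auto
    next
      case False
      then have "g (Suc b) = v" using Suc.prems(2) step[of b] by linarith
      then show ?thesis using Suc.prems by auto
    qed
  qed
qed

lemma window:
  fixes b :: "real^'n::finite"
  assumes r: "2 \<le> length r" and nt: "\<not> rep_traversable len d b r"
  shows "\<exists>K. K \<subseteq> {..<length r} \<and> (K = {} \<or> (\<exists>l h. l \<le> h \<and> K = {l..h})) \<and> (\<forall>k\<in>K. b $ (r!k) \<noteq> 1)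
           \<and> \<not> rep_traversable len d (\<chi> j. if j \<in> (\<lambda>k. r!k) ` K then 0 else 1) r"
proof -
  define m where "m = length r - 1"
  have m1: "1 \<le> m" "length r = Suc m" using r unfolding m_def by auto
  define g where "g = gidx m"
  have w: "walk_node r k = r ! g k" for k using walk_node_eq[OF r] unfolding g_def m_def by simp
  have glt: "g k < length r" for k using gidx_lt[OF m1(1)] m1(2) unfolding g_def by (simp add: less_Suc_eq_le)
  have step: "g (Suc k) \<le> g k + 1 \<and> g k \<le> g (Suc k) + 1" for k using gidx_step[OF m1(1)] unfolding g_def by blast
  show ?thesis
  proof (cases "\<exists>j\<in>set r. b $ j = 1")
    case False
    define K where "K = {0..m}"
    have K1: "K \<subseteq> {..<length r}" unfolding K_def using m1 by auto
    have K2: "(\<lambda>k. r!k) ` K = set r" unfolding K_def using m1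
      by (auto simp: set_conv_nth less_Suc_eq_le)
    have "\<not> rep_traversable len d (\<chi> j. if j \<in> (\<lambda>k. r!k) ` K then 0 else 1) r"
      unfolding rep_traversable_def K2 by auto
    moreover have "\<forall>k\<in>K. b $ (r!k) \<noteq> 1" using False K1 by auto
    ultimately show ?thesis using K1 unfolding K_def by blast
  next
    case True
    then obtain i j where ij: "i < j" "b $ walk_node r i = 1" "b $ walk_node r j = 1"
      "\<forall>k. i < k \<and> k < j \<longrightarrow> b $ walk_node r k \<noteq> 1" "\<not> travel_dist len r i j \<le> d"
      using nt unfolding rep_traversable_def by blast
    define K where "K = g ` {i<..<j}"
    have K1: "K \<subseteq> {..<length r}" unfolding K_def using glt by auto
    have K3: "\<forall>k\<in>K. b $ (r!k) \<noteq> 1" unfolding K_def using ij(4) w by auto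
    have finK: "finite K" unfolding K_def by simp
    have K2: "K = {} \<or> (\<exists>l h. l \<le> h \<and> K = {l..h})"
    proof (cases "K = {}")
      case False
      have "K = {Min K..Max K}"
      proof
        show "K \<subseteq> {Min K..Max K}" using finK by auto
        show "{Min K..Max K} \<subseteq> K"
        proof
          fix v assume v: "v \<in> {Min K..Max K}"
          have "Min K \<in> g ` {i<..<j}" "Max K \<in> g ` {i<..<j}" using finK False unfolding K_def[symmetric] by auto
          then obtain c1 c2 where c: "c1 \<in> {i<..<j}" "c2 \<in> {i<..<j}" "g c1 = Min K" "g c2 = Max K"
            by (metis imageE)
          have vv: "Min K \<le> v" "v \<le> Max K" using v by auto
          have "\<exists>c. c \<in> {i<..<j} \<and> g c = v"
          proof (cases "c1 \<le> c2")
            case True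
            obtain c where cc: "c1 \<le> c" "c \<le> c2" "g c = v"
              using discrete_ivt[of g c1 c2 v, OF step True] vv c(3,4) by auto
            have "c \<in> {i<..<j}" using cc(1,2) c(1,2) by (simp only: greaterThanLessThan_iff) linarith
            then show ?thesis using cc(3) by blast
          next
            case False
            then have F: "c2 \<le> c1" by simp
            obtain c where cc: "c2 \<le> c" "c \<le> c1" "g c = v"
              using discrete_ivt[of g c2 c1 v, OF step F] vv c(3,4) by auto
            have "c \<in> {i<..<j}" using cc(1,2) c(1,2) by (simp only: greaterThanLessThan_iff) linarith
            then show ?thesis using cc(3) by blast
          qed
          then show "v \<in> K" unfolding K_def by blast
        qed
      qed
      moreover have "Min K \<le> Max K" using finK False by (meson Max_ge Min_in)
      ultimately show ?thesis by blast
    qed simp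
    have notin1: "walk_node r i \<notin> (\<lambda>k. r!k) ` K"
    proof
      assume "walk_node r i \<in> (\<lambda>k. r!k) ` K"
      then obtain c where c: "c \<in> {i<..<j}" "walk_node r i = r ! g c" unfolding K_def by blast
      then have "b $ walk_node r c = 1" using ij(2) w by simp
      then show False using ij(4) c(1) by auto
    qed
    have notin2: "walk_node r j \<notin> (\<lambda>k. r!k) ` K"
    proof
      assume "walk_node r j \<in> (\<lambda>k. r!k) ` K"
      then obtain c where c: "c \<in> {i<..<j}" "walk_node r j = r ! g c" unfolding K_def by blast
      then have "b $ walk_node r c = 1" using ij(3) w by simp
      then show False using ij(4) c(1) by auto
    qed
    have inK: "walk_node r k \<in> (\<lambda>k. r!k) ` K" if "i < k" "k < j" for k
    proof -
      have "k \<in> {i<..<j}" using that by simp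
      then have "g k \<in> K" unfolding K_def by blast
      then show ?thesis unfolding w by blast
    qed
    have "\<not> rep_traversable len d (\<chi> j. if j \<in> (\<lambda>k. r!k) ` K then 0 else 1) r"
      unfolding rep_traversable_def
    proof (intro notI, elim conjE)
      assume A: "\<forall>i j. i < j \<and> (\<chi> j. if j \<in> (!) r ` K then 0 else (1::real)) $ walk_node r i = 1 \<and>
            (\<chi> j. if j \<in> (!) r ` K then 0 else (1::real)) $ walk_node r j = 1 \<and>
            (\<forall>k. i < k \<and> k < j \<longrightarrow> (\<chi> j. if j \<in> (!) r ` K then 0 else (1::real)) $ walk_node r k \<noteq> 1) \<longrightarrow>
            travel_dist len r i j \<le> d"
      have e1: "(\<chi> j. if j \<in> (!) r ` K then 0 else (1::real)) $ walk_node r i = 1" using notin1 by simp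
      have e2: "(\<chi> j. if j \<in> (!) r ` K then 0 else (1::real)) $ walk_node r j = 1" using notin2 by simp
      have e3: "\<forall>k. i < k \<and> k < j \<longrightarrow> (\<chi> j. if j \<in> (!) r ` K then 0 else (1::real)) $ walk_node r k \<noteq> 1"
        using inK by simp
      have "travel_dist len r i j \<le> d"
        using A ij(1) e1 e2 e3 by blast
      then show False using ij(5) by simp
    qed
    then show ?thesis using K1 K2 K3 by blast
  qed
qed

lemma gmin_one:
  assumes "y \<in> unit_cube" "\<forall>S\<in>C. 1 \<le> (\<Sum>j\<in>S. y $ j)"
  shows "gmin C y = 1"
  using gmin_props(2)[OF assms(1), of C] gmin_props(4)[OF assms(1), of 1 C] assms(2) by simp

lemma trav_key:
  fixes r :: "'n::finite list" and Dr :: "'n set set" and x :: "real^'n"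
  assumes r: "2 \<le> length r" "distinct r"
    and Dchar: "\<forall>x'. binary_vec x' \<longrightarrow> (rep_traversable len d x' r \<longleftrightarrow> (\<forall>S\<in>Dr. 1 \<le> (\<Sum>j\<in>S. x' $ j)))"
    and x: "x \<in> unit_cube" and tpos: "0 < gmin Dr x"
    and A_def: "\<And>j. A j = min 1 (x $ j / gmin Dr x)"
    and P_def: "\<And>k. P k = (\<Sum>k'<k. A (r ! k'))"
    and lo_def: "\<And>j. lo j = P (THE k. k < length r \<and> r ! k = j)"
    and u: "0 \<le> u" "u < 1"
  shows "rep_traversable len d (rvec lo A u) r"
proof (rule ccontr)
  define t where "t = gmin Dr x"
  have t: "0 < t" using tpos unfolding t_def .
  have x01: "0 \<le> x $ j" "x $ j \<le> 1" for j using x unfolding unit_cube_def by auto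
  have A01: "\<forall>j. 0 \<le> A j \<and> A j \<le> 1" using x01 t unfolding A_def t_def[symmetric] by auto
  define b where "b = rvec lo A u"
  have bbin: "binary_vec b" unfolding b_def by (rule rvec_binary[OF A01])
  have idx: "(THE k'. k' < length r \<and> r ! k' = r ! k) = k" if "k < length r" for k
    using that r(2) by (intro the_equality) (auto simp: nth_eq_iff_index_eq)
  have bk: "b $ (r!k) = of_int (\<lfloor>P (Suc k) + u\<rfloor> - \<lfloor>P k + u\<rfloor>)" if "k < length r" for k
  proof -
    have "lo (r!k) = P k" using lo_def idx[OF that] by simp
    moreover have "P (Suc k) = P k + A (r!k)" using P_def by simp
    ultimately show ?thesis unfolding b_def rvec_def by simp
  qed
  assume "\<not> rep_traversable len d (rvec lo A u) r"
  then have nt: "\<not> rep_traversable len d b r" unfolding b_def .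
  obtain K where K: "K \<subseteq> {..<length r}" "K = {} \<or> (\<exists>l h. l \<le> h \<and> K = {l..h})" "\<forall>k\<in>K. b $ (r!k) \<noteq> 1"
    "\<not> rep_traversable len d (\<chi> j. if j \<in> (\<lambda>k. r!k) ` K then 0 else 1) r"
    using window[OF r(1) nt] by blast
  define J where "J = (\<lambda>k. r!k) ` K"
  define e :: "real^'n" where "e = (\<chi> j. if j \<in> J then 0 else 1)"
  have ebin: "binary_vec e" unfolding e_def binary_vec_def by simp
  have "\<not> (\<forall>S\<in>Dr. 1 \<le> (\<Sum>j\<in>S. e $ j))" using Dchar ebin K(4) unfolding e_def J_def by blast
  then obtain S where S: "S \<in> Dr" "(\<Sum>j\<in>S. e $ j) < 1" by force
  have SJ: "S \<subseteq> J"
  proof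
    fix j assume j: "j \<in> S"
    show "j \<in> J"
    proof (rule ccontr)
      assume "j \<notin> J"
      then have "e $ j = 1" unfolding e_def by simp
      moreover have "e $ j \<le> (\<Sum>j\<in>S. e $ j)"
        using j by (intro member_le_sum) (auto simp: e_def)
      ultimately show False using S(2) by simp
    qed
  qed
  have "t \<le> (\<Sum>j\<in>S. x $ j)" unfolding t_def using gmin_props(3)[OF x S(1)] .
  also have "\<dots> \<le> (\<Sum>j\<in>J. x $ j)" using SJ x01 by (intro sum_mono2) auto
  also have "\<dots> = (\<Sum>k\<in>K. x $ (r!k))"
    unfolding J_def using K(1) r(2) by (subst sum.reindex) (auto intro!: inj_on_nth)
  finally have tK: "t \<le> (\<Sum>k\<in>K. x $ (r!k))" .
  have "K \<noteq> {}" using tK t by auto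
  then obtain l h where lh: "l \<le> h" "K = {l..h}" using K(2) by blast
  have sumA: "1 \<le> (\<Sum>k\<in>K. A (r!k))"
  proof (cases "\<exists>k\<in>K. t \<le> x $ (r!k)")
    case True
    then obtain k where k: "k \<in> K" "t \<le> x $ (r!k)" by blast
    have "A (r!k) = 1" using k(2) t unfolding A_def t_def[symmetric] by (simp add: min_def field_simps)
    moreover have "A (r!k) \<le> (\<Sum>k\<in>K. A (r!k))" using k(1) A01 lh by (intro member_le_sum) auto
    ultimately show ?thesis by simp
  next
    case False
    then have "A (r!k) = x $ (r!k) / t" if "k \<in> K" for k
      using that t unfolding A_def t_def[symmetric] by (auto simp: min_def field_simps)
    then have "(\<Sum>k\<in>K. A (r!k)) = (\<Sum>k\<in>K. x $ (r!k)) / t" by (simp add: sum_divide_distrib)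
    then have "t * (\<Sum>k\<in>K. A (r!k)) = (\<Sum>k\<in>K. x $ (r!k))" using t by simp
    then have "t * 1 \<le> t * (\<Sum>k\<in>K. A (r!k))" using tK by simp
    then show ?thesis using t by (simp only: mult_le_cancel_left_pos)
  qed
  have telA: "(\<Sum>k\<in>K. A (r!k)) = P (Suc h) - P l"
  proof -
    have "(\<Sum>k\<in>K. A (r!k)) = (\<Sum>k = l..h. P (Suc k) - P k)" unfolding lh(2) using P_def by simp
    also have "\<dots> = P (Suc h) - P l" using lh(1) by (intro sum_Suc_diff) simp
    finally show ?thesis .
  qed
  have telb: "(\<Sum>k\<in>K. b $ (r!k)) = of_int (\<lfloor>P (Suc h) + u\<rfloor> - \<lfloor>P l + u\<rfloor>)"
  proof -
    have "(\<Sum>k\<in>K. b $ (r!k)) = (\<Sum>k = l..h. real_of_int \<lfloor>P (Suc k) + u\<rfloor> - real_of_int \<lfloor>P k + u\<rfloor>)"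
      unfolding lh(2) using bk K(1) lh(2) by (intro sum.cong) auto
    also have "\<dots> = real_of_int \<lfloor>P (Suc h) + u\<rfloor> - real_of_int \<lfloor>P l + u\<rfloor>"
      using lh(1) by (intro sum_Suc_diff[where f="\<lambda>k. real_of_int \<lfloor>P k + u\<rfloor>"]) simp
    finally show ?thesis by simp
  qed
  have "\<lfloor>P l + u\<rfloor> + 1 \<le> \<lfloor>P (Suc h) + u\<rfloor>"
  proof -
    have "\<lfloor>P l + u + 1\<rfloor> \<le> \<lfloor>P (Suc h) + u\<rfloor>" using sumA telA by (intro floor_mono) simp
    then show ?thesis by simp
  qed
  then have "1 \<le> (\<Sum>k\<in>K. b $ (r!k))" using telb by simp
  moreover have "b $ (r!k) = 0" if "k \<in> K" for k
    using K(3) that bbin unfolding binary_vec_def by blast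
  ultimately show False by simp
qed

lemma simple_main:
  fixes r :: "'n::finite list" and Dr :: "'n set set" and v :: "real^'n \<Rightarrow> real" and x :: "real^'n"
  assumes r: "2 \<le> length r" "distinct r"
    and Dchar: "\<forall>x'. binary_vec x' \<longrightarrow> (rep_traversable len d x' r \<longleftrightarrow> (\<forall>S\<in>Dr. 1 \<le> (\<Sum>j\<in>S. x' $ j)))"
    and F: "0 \<le> F"
    and conc: "concave_on unit_cube v"
    and vbin: "\<forall>b. binary_vec b \<longrightarrow> v b = F * gmin Dr b"
    and x: "x \<in> unit_cube"
  shows "F * gmin Dr x \<le> v x"
proof -
  define t where "t = gmin Dr x"
  have t01: "0 \<le> t" "t \<le> 1" using gmin_props(1,2)[OF x] unfolding t_def by auto
  have vnn: "0 \<le> v y" if "y \<in> unit_cube" for y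
  proof (rule concave_nonneg[OF conc _ that])
    show "\<forall>b. binary_vec b \<longrightarrow> 0 \<le> v b"
    proof (intro allI impI)
      fix b :: "real^'n" assume bb: "binary_vec b"
      have "0 \<le> F * gmin Dr b" using F gmin_props(1)[OF binary_in_cube[OF bb]] by (rule mult_nonneg_nonneg)
      then show "0 \<le> v b" using vbin bb by simp
    qed
  qed
  show ?thesis
  proof (cases "t = 0")
    case True
    then show ?thesis using vnn[OF x] unfolding t_def by simp
  next
    case False
    then have t: "0 < t" using t01 by simp
    have x01: "0 \<le> x $ j" "x $ j \<le> 1" for j using x unfolding unit_cube_def by auto
    define A where "A j = min 1 (x $ j / t)" for j
    define P where "P k = (\<Sum>k'<k. A (r ! k'))" for k
    define lo where "lo j = P (THE k. k < length r \<and> r ! k = j)" for j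
    have A01: "\<forall>j. 0 \<le> A j \<and> A j \<le> 1" using x01 t unfolding A_def by auto
    define Bv :: "real^'n" where "Bv = (\<chi> j. max 0 (x $ j - t) / (1 - t))"
    define Av :: "real^'n" where "Av = (\<chi> j. A j)"
    have Bcube: "Bv \<in> unit_cube"
    proof (cases "t = 1")
      case True then show ?thesis unfolding Bv_def unit_cube_def by simp
    next
      case False
      then have "0 < 1 - t" using t01 by simp
      then show ?thesis unfolding Bv_def unit_cube_def using x01
        by (auto simp: divide_le_eq max_def)
    qed
    have Acube: "Av \<in> unit_cube" unfolding Av_def unit_cube_def using A01 by simp
    have dec: "x = (1 - t) *\<^sub>R Bv + t *\<^sub>R Av"
    proof (rule vec_eq_iff[THEN iffD2], rule allI)
      fix j
      have "(1 - t) * (max 0 (x $ j - t) / (1 - t)) + t * min 1 (x $ j / t) = x $ j"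
      proof (cases "t = 1")
        case True then show ?thesis using x01[of j] by (simp add: min_def)
      next
        case False
        then have "0 < 1 - t" using t01 by simp
        then have "(1 - t) * (max 0 (x $ j - t) / (1 - t)) = max 0 (x $ j - t)" by simp
        moreover have "t * min 1 (x $ j / t) = min t (x $ j)" using t by (simp add: min_def field_simps)
        ultimately show ?thesis by (simp add: max_def min_def)
      qed
      then show "x $ j = ((1 - t) *\<^sub>R Bv + t *\<^sub>R Av) $ j" unfolding Bv_def Av_def A_def by simp
    qed
    have vA: "F \<le> v Av"
    proof (rule concave_hull_lower[OF conc])
      show "rvec lo A ` {0..<1} \<subseteq> unit_cube" using rvec_binary[OF A01] binary_in_cube by blast
      show "\<forall>b\<in>rvec lo A ` {0..<1}. F \<le> v b"
      proof
        fix b assume "b \<in> rvec lo A ` {0..<1}"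
        then obtain u where u: "0 \<le> u" "u < 1" "b = rvec lo A u" by auto
        have bb: "binary_vec b" using u(3) rvec_binary[OF A01] by simp
        have "rep_traversable len d b r"
          unfolding u(3)
          by (rule trav_key[OF r Dchar x _ _ _ _ u(1,2)])
             (use t in \<open>simp_all add: t_def A_def P_def lo_def\<close>)
        then have "\<forall>S\<in>Dr. 1 \<le> (\<Sum>j\<in>S. b $ j)" using Dchar bb by blast
        then have "gmin Dr b = 1" using gmin_one binary_in_cube[OF bb] by blast
        then show "F \<le> v b" using vbin bb by simp
      qed
      show "Av \<in> convex hull rvec lo A ` {0..<1}" unfolding Av_def by (rule round_hull[OF A01])
    qed
    have "(1 - t) * v Bv + t * v Av \<le> v ((1 - t) *\<^sub>R Bv + t *\<^sub>R Av)"
      using concave_onD[OF conc, of t Bv Av] t01 Bcube Acube by simp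
    then have "(1 - t) * v Bv + t * v Av \<le> v x" using dec by simp
    moreover have "0 \<le> (1 - t) * v Bv" using vnn[OF Bcube] t01 by simp
    moreover have "t * F \<le> t * v Av" using vA t by simp
    ultimately show ?thesis unfolding t_def by (simp add: mult.commute)
  qed
qed


theorem proposition3:
  fixes A :: "('n::finite) set set" and len :: "'n set \<Rightarrow> real" and d :: real
    and Q :: "'q set" and f :: "'q \<Rightarrow> real" and R :: "'q \<Rightarrow> 'n list set"
    and D :: "'q \<Rightarrow> 'n list \<Rightarrow> 'n set set"
    and q :: 'q and x :: "real^'n"
  assumes graph: "undirected_graph A"
    and d_pos: "d > 0"
    and lengths: "\<forall>e\<in>A. 0 < len e \<and> len e \<le> d"
    and Q_fin: "finite Q"
    and f_nonneg: "\<forall>q\<in>Q. f q \<ge> 0"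
    and R_fin: "\<forall>q\<in>Q. finite (R q) \<and> R q \<noteq> {}"
    and R_paths: "\<forall>q\<in>Q. \<forall>r\<in>R q. is_path A r"
    and D_char: "\<forall>q\<in>Q. \<forall>r\<in>R q. \<forall>x'. binary_vec x' \<longrightarrow>
                   (rep_traversable len d x' r \<longleftrightarrow> (\<forall>S\<in>D q r. (\<Sum>j\<in>S. x' $ j) \<ge> 1))"
    and q: "q \<in> Q"
    and x: "x \<in> unit_cube"
  shows "(v_tight (f q) (R q) (D q) x \<le> v_agg (f q) (R q) (D q) x
            \<and> v_agg (f q) (R q) (D q) x \<le> v_disagg (f q) (R q) (D q) x)
         \<and> ((\<exists>r. R q = {r}) \<longrightarrow>
              v_agg (f q) (R q) (D q) x = v_disagg (f q) (R q) (D q) x)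
         \<and> ((\<exists>r. R q = {r} \<and> simple_path A r) \<longrightarrow>
              v_tight (f q) (R q) (D q) x = v_agg (f q) (R q) (D q) x
              \<and> v_agg (f q) (R q) (D q) x = v_disagg (f q) (R q) (D q) x)"
  proof -
  define F where "F = f q"
  have F0: "0 \<le> F" using f_nonneg q unfolding F_def by simp
  have Rfin: "finite (R q)" using R_fin q by simp
  let ?va = "v_agg F (R q) (D q)"
  let ?X = "{v x |v. v \<in> K_set F (R q) (D q)}"
  have vagg_x: "?va x = F * gmin (agg_family (R q) (D q)) x" by (rule v_agg_eq[OF F0 x])
  have inK: "?va \<in> K_set F (R q) (D q)"
    unfolding K_set_def using v_agg_concave[OF F0] by simp
  have vnn: "0 \<le> v x" if "v \<in> K_set F (R q) (D q)" for v
  proof (rule concave_nonneg[OF _ _ x])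
    show "concave_on unit_cube v" using that unfolding K_set_def by simp
    show "\<forall>b. binary_vec b \<longrightarrow> 0 \<le> v b"
    proof (intro allI impI)
      fix b :: "real^'n" assume bb: "binary_vec b"
      have "0 \<le> F * gmin (agg_family (R q) (D q)) b"
        using F0 gmin_props(1)[OF binary_in_cube[OF bb]] by (rule mult_nonneg_nonneg)
      moreover have "v b = ?va b" using that bb unfolding K_set_def by simp
      moreover have "?va b = F * gmin (agg_family (R q) (D q)) b" by (rule v_agg_eq[OF F0 binary_in_cube[OF bb]])
      ultimately show "0 \<le> v b" by simp
    qed
  qed
  have bdd: "bdd_below ?X" using vnn by (intro bdd_belowI[of _ 0]) auto
  have mem: "?va x \<in> ?X" using inK by blast
  have tight_le: "v_tight F (R q) (D q) x \<le> ?va x"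
    unfolding v_tight_def by (rule cInf_lower[OF mem bdd])
  have agg_le: "?va x \<le> v_disagg F (R q) (D q) x"
    using vagg_x disagg_ge[OF Rfin F0 x] by simp
  have single: "?va x = v_disagg F (R q) (D q) x" if "R q = {r}" for r
    using vagg_x v_disagg_single[OF F0 x, of r "D q"] agg_family_single[of r "D q"] that by simp
  have simple: "v_tight F (R q) (D q) x = ?va x" if rs: "R q = {r}" "simple_path A r" for r
    unfolding v_tight_def
  proof (rule cInf_eq_minimum[OF mem])
    fix w assume "w \<in> ?X"
    then obtain v where v: "w = v x" "v \<in> K_set F (R q) (D q)" by blast
    have r2: "2 \<le> length r" "distinct r" using rs(2) unfolding simple_path_def is_path_def by auto
    have Dchar: "\<forall>x'. binary_vec x' \<longrightarrow> (rep_traversable len d x' r \<longleftrightarrow> (\<forall>S\<in>D q r. 1 \<le> (\<Sum>j\<in>S. x' $ j)))"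
      using D_char q rs(1) by simp
    have conc: "concave_on unit_cube v" using v(2) unfolding K_set_def by simp
    have vbin: "\<forall>b. binary_vec b \<longrightarrow> v b = F * gmin (D q r) b"
    proof (intro allI impI)
      fix b :: "real^'n" assume bb: "binary_vec b"
      have "v b = ?va b" using v(2) bb unfolding K_set_def by simp
      also have "\<dots> = F * gmin (agg_family (R q) (D q)) b" by (rule v_agg_eq[OF F0 binary_in_cube[OF bb]])
      finally show "v b = F * gmin (D q r) b" using rs(1) agg_family_single[of r "D q"] by simp
    qed
    have "F * gmin (D q r) x \<le> v x" by (rule simple_main[OF r2 Dchar F0 conc vbin x])
    then show "?va x \<le> w" using vagg_x v(1) rs(1) agg_family_single[of r "D q"] by simp
  qed
  show ?thesis
    unfolding F_def[symmetric]
    using tight_le agg_le single simple by blast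
qed

end
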